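(* Let $n\ge 1$, let $X:\mathbb{C}^n\to\mathbb{C}^n$ be a nilpotent linear operator, and fix $i$ with $1\le i\le n$. Suppose $h$ is a Hessenberg function with $h(i)=i$, and suppose that the function $h'$ defined by $h'(j)=h(j)$ for $j\neq i$ and $h'(i)=i-1$ is also a Hessenberg function. Then $\mathcal{H}(X,h)=\mathcal{H}(X,h')$.
   Context: A (full) flag in $\mathbb{C}^n$ is a chain $V_1\subseteq V_2\subseteq\cdots\subseteq V_n=\mathbb{C}^n$ with $\dim V_k=k$; the flag variety is $GL_n(\mathbb{C})/B$ where $B$ is the group of invertible upper-triangular matrices, and $[g]$ denotes the flag whose $k$-dimensional subspace is spanned by the first $k$ columns of $g$. A Hessenberg function is a nondecreasing function $h:\{1,\dots,n\}\to\{1,\dots,n\}$. Its Hessenberg space is $H_h=\operatorname{span}\{E_{kl}: k\le h(l)\}$, where $E_{kl}$ is the matrix unit with $1$ in entry $(k,l)$ and $0$ elsewhere. The Hessenberg variety of a linear operator $X$ and $h$ is $\mathcal{H}(X,h)=\{[g]: g^{-1}Xg\in H_h\}$, equivalently the set of flags with $XV_k\subseteq V_{h(k)}$ for all $k$. *)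

theory Defs
  imports "Jordan_Normal_Form.Matrix"
begin

text \<open>Conventions: C^n is modelled by complex vectors of dimension n (carrier_vec n),
 linear operators on C^n by n x n complex matrices. Matrix indices are 0-based in the
 library; the paper's 1-based indices k correspond to library index k-1.\<close>

definition hessenberg_function :: "nat \<Rightarrow> (nat \<Rightarrow> nat) \<Rightarrow> bool" where
  "hessenberg_function n h \<longleftrightarrow>
     (\<forall>j\<in>{1..n}. h j \<in> {1..n}) \<and> (\<forall>j\<in>{1..n}. \<forall>l\<in>{1..n}. j \<le> l \<longrightarrow> h j \<le> h l)"

text \<open>Hessenberg space H_h = span of E_{kl} with k <= h(l) (1-based), i.e. matrices
 whose (k,l) entry vanishes whenever k > h(l).\<close>
definition hessenberg_space :: "nat \<Rightarrow> (nat \<Rightarrow> nat) \<Rightarrow> complex mat set" where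
  "hessenberg_space n h = {M \<in> carrier_mat n n.
     \<forall>k<n. \<forall>l<n. h (l + 1) < k + 1 \<longrightarrow> M $$ (k, l) = 0}"

definition mat_inv :: "complex mat \<Rightarrow> complex mat" where
  "mat_inv g = (SOME B. inverts_mat g B \<and> inverts_mat B g)"

definition GL :: "nat \<Rightarrow> complex mat set" where
  "GL n = {g \<in> carrier_mat n n. invertible_mat g}"

text \<open>The flag [g]: its k-th subspace (k = 1..n) is the span of the first k columns of g,
 i.e. all vectors g v with v supported on the first k coordinates.\<close>
definition flag_of :: "nat \<Rightarrow> complex mat \<Rightarrow> nat \<Rightarrow> complex vec set" where
  "flag_of n g k = {g *\<^sub>v v | v. v \<in> carrier_vec n \<and> (\<forall>j<n. k \<le> j \<longrightarrow> v $ j = 0)}"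

definition nilpotent_mat :: "nat \<Rightarrow> complex mat \<Rightarrow> bool" where
  "nilpotent_mat n X \<longleftrightarrow> X \<in> carrier_mat n n \<and> (\<exists>m. X ^\<^sub>m m = 0\<^sub>m n n)"

definition hessenberg_variety :: "nat \<Rightarrow> complex mat \<Rightarrow> (nat \<Rightarrow> nat) \<Rightarrow> (nat \<Rightarrow> complex vec set) set" where
  "hessenberg_variety n X h =
     {flag_of n g | g. g \<in> GL n \<and> mat_inv g * X * g \<in> hessenberg_space n h}"

end

theory Submission
  imports Defs
begin

lemma pow_block:
  fixes M :: "complex mat"
  assumes M: "M \<in> carrier_mat n n" and p: "p < n"
    and A: "\<And>k l. k < n \<Longrightarrow> l < p \<Longrightarrow> p \<le> k \<Longrightarrow> M $$ (k, l) = 0"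
    and B: "\<And>k. k < n \<Longrightarrow> p < k \<Longrightarrow> M $$ (k, p) = 0"
  shows "(\<forall>k l. k < n \<longrightarrow> l < p \<longrightarrow> p \<le> k \<longrightarrow> (M ^\<^sub>m m) $$ (k, l) = 0)
       \<and> (\<forall>k. k < n \<longrightarrow> p < k \<longrightarrow> (M ^\<^sub>m m) $$ (k, p) = 0)
       \<and> (M ^\<^sub>m m) $$ (p, p) = (M $$ (p, p)) ^ m"
proof (induction m)
  case 0
  then show ?case using p M by auto
next
  case (Suc m)
  let ?P = "M ^\<^sub>m m"
  have Pc: "?P \<in> carrier_mat n n" using M by simp
  have e: "\<And>k l. k < n \<Longrightarrow> l < n \<Longrightarrow> (M ^\<^sub>m Suc m) $$ (k, l) = (\<Sum>j<n. ?P $$ (k, j) * M $$ (j, l))"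
    using M Pc by (auto simp: scalar_prod_def lessThan_atLeast0 intro!: sum.cong)
  have IA: "\<And>k l. k < n \<Longrightarrow> l < p \<Longrightarrow> p \<le> k \<Longrightarrow> ?P $$ (k, l) = 0"
    and IB: "\<And>k. k < n \<Longrightarrow> p < k \<Longrightarrow> ?P $$ (k, p) = 0"
    and IC: "?P $$ (p, p) = (M $$ (p, p)) ^ m" using Suc by auto
  have sA: "(M ^\<^sub>m Suc m) $$ (k, l) = 0" if "k < n" "l < p" "p \<le> k" for k l
  proof -
    have "(\<Sum>j<n. ?P $$ (k, j) * M $$ (j, l)) = 0"
    proof (rule sum.neutral, intro ballI)
      fix j assume "j \<in> {..<n}"
      then show "?P $$ (k, j) * M $$ (j, l) = 0"
        using that IA A by (cases "j < p") auto
    qed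
    then show ?thesis using e that p by simp
  qed
  have sBC: "(M ^\<^sub>m Suc m) $$ (k, p) = ?P $$ (k, p) * M $$ (p, p)" if "k < n" "p \<le> k" for k
  proof -
    have "(\<Sum>j<n. ?P $$ (k, j) * M $$ (j, p)) = (\<Sum>j\<in>{p}. ?P $$ (k, j) * M $$ (j, p))"
    proof (rule sum.mono_neutral_right)
      show "\<forall>j\<in>{..<n} - {p}. ?P $$ (k, j) * M $$ (j, p) = 0"
      proof
        fix j assume "j \<in> {..<n} - {p}"
        then show "?P $$ (k, j) * M $$ (j, p) = 0"
          using that IA B by (cases "j < p") auto
      qed
    qed (use p in auto)
    then show ?thesis using e that p by simp
  qed
  show ?case
  proof (intro conjI allI impI)
    fix k l assume "k < n" "l < p" "p \<le> k" then show "(M ^\<^sub>m Suc m) $$ (k, l) = 0" by (rule sA)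
  next
    fix k assume "k < n" "p < k" then show "(M ^\<^sub>m Suc m) $$ (k, p) = 0" using sBC IB by simp
  next
    show "(M ^\<^sub>m Suc m) $$ (p, p) = M $$ (p, p) ^ Suc m" using sBC[of p] IC p by simp
  qed
qed

lemma conj_pow:
  fixes B X g :: "complex mat"
  assumes "B \<in> carrier_mat n n" "X \<in> carrier_mat n n" "g \<in> carrier_mat n n" "g * B = 1\<^sub>m n" "B * g = 1\<^sub>m n"
  shows "(B * X * g) ^\<^sub>m m = B * X ^\<^sub>m m * g"
proof (induction m)
  case 0
  then show ?case using assms by simp
next
  case (Suc m)
  let ?P = "X ^\<^sub>m m"
  have Pc: "?P \<in> carrier_mat n n" using assms by simp
  note c = assms(1-3) Pc
  have "(B * X * g) ^\<^sub>m Suc m = (B * ?P * g) * (B * X * g)" using Suc by simp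
  also have "\<dots> = (B * ?P) * (g * (B * X * g))"
    by (rule assoc_mult_mat[of _ n n _ n _ n]) (use c in auto)
  also have "g * (B * X * g) = g * (B * (X * g))"
    using c by (subst assoc_mult_mat[of _ n n _ n _ n]) auto
  also have "\<dots> = (g * B) * (X * g)"
    by (rule assoc_mult_mat[symmetric, of _ n n _ n _ n]) (use c in auto)
  also have "\<dots> = X * g" using assms c by simp
  also have "(B * ?P) * (X * g) = B * ?P * X * g"
    by (rule assoc_mult_mat[symmetric, of _ n n _ n _ n]) (use c in auto)
  also have "\<dots> = B * (?P * X) * g"
    using c by (subst assoc_mult_mat[of B n n ?P n X n]) auto
  also have "\<dots> = B * X ^\<^sub>m Suc m * g" by simp
  finally show ?case .
qed

theorem mainTheorem1:
  fixes n i :: nat and X :: "complex mat" and h :: "nat \<Rightarrow> nat"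
  assumes "n \<ge> 1"
    and "nilpotent_mat n X"
    and "1 \<le> i" and "i \<le> n"
    and "hessenberg_function n h"
    and "h i = i"
    and "hessenberg_function n (h(i := i - 1))"
  shows "hessenberg_variety n X h = hessenberg_variety n X (h(i := i - 1))"
proof -
  let ?h' = "h(i := i - 1)"
  have hf: "\<forall>j\<in>{1..n}. ?h' j \<in> {1..n}" "\<forall>j\<in>{1..n}. \<forall>l\<in>{1..n}. j \<le> l \<longrightarrow> ?h' j \<le> ?h' l"
    using assms(7) unfolding hessenberg_function_def by blast+
  have i2: "2 \<le> i" using hf(1) assms(3,4) by force
  define p where "p = i - 1"
  have pn: "p < n" "1 \<le> p" using i2 assms(4) by (auto simp: p_def)
  have hle: "h j \<le> p" if "1 \<le> j" "j \<le> p" for j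
  proof -
    have "?h' j \<le> ?h' i" using hf(2)[rule_format, of j i] that assms(3,4) pn by (auto simp: p_def)
    moreover have "j \<noteq> i" using that by (auto simp: p_def)
    ultimately show ?thesis using that i2 by (auto simp: p_def split: if_splits)
  qed
  have sub: "hessenberg_space n ?h' \<subseteq> hessenberg_space n h"
    unfolding hessenberg_space_def using assms(6)
    by (auto split: if_splits) (metis add_diff_cancel_right' le_less_trans diff_le_self)
  have sup: "M \<in> hessenberg_space n ?h'" if g: "g \<in> GL n" and M: "M = mat_inv g * X * g"
     and MH: "M \<in> hessenberg_space n h" for g M
  proof -
    have gc: "g \<in> carrier_mat n n" and gi: "invertible_mat g" using g by (auto simp: GL_def)
    have "\<exists>B. inverts_mat g B \<and> inverts_mat B g" using gi by (auto simp: invertible_mat_def)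
    then have inv: "inverts_mat g (mat_inv g) \<and> inverts_mat (mat_inv g) g"
      unfolding mat_inv_def by (rule someI_ex)
    define B where "B = mat_inv g"
    have gB: "g * B = 1\<^sub>m n" using inv gc by (auto simp: B_def inverts_mat_def)
    have Bg1: "B * g = 1\<^sub>m (dim_row B)" using inv by (auto simp: B_def inverts_mat_def)
    have "dim_col B = n" using gB gc by (metis index_mult_mat(3) index_one_mat(3))
    moreover have "dim_row B = n" using Bg1 gc by (metis index_mult_mat(3) index_one_mat(3) carrier_matD(2))
    ultimately have Bc: "B \<in> carrier_mat n n" by auto
    have Bg: "B * g = 1\<^sub>m n" using Bg1 Bc by auto
    have Xc: "X \<in> carrier_mat n n" and "\<exists>m. X ^\<^sub>m m = 0\<^sub>m n n" using assms(2) by (auto simp: nilpotent_mat_def)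
    then obtain m where Xm: "X ^\<^sub>m m = 0\<^sub>m n n" by blast
    have Mc: "M \<in> carrier_mat n n" using MH by (auto simp: hessenberg_space_def)
    have Mm: "M ^\<^sub>m m = 0\<^sub>m n n"
      using conj_pow[OF Bc Xc gc gB Bg, of m] Xm Bc gc unfolding M B_def[symmetric] by simp
    have MHz: "\<And>k l. k < n \<Longrightarrow> l < n \<Longrightarrow> h (l + 1) < k + 1 \<Longrightarrow> M $$ (k, l) = 0"
      using MH by (auto simp: hessenberg_space_def)
    have A: "M $$ (k, l) = 0" if "k < n" "l < p" "p \<le> k" for k l
      using MHz[of k l] hle[of "l+1"] that pn by auto
    have Bz: "M $$ (k, p) = 0" if "k < n" "p < k" for k
      using MHz[of k p] that pn assms(6) i2 by (auto simp: p_def)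
    have "(M ^\<^sub>m m) $$ (p, p) = (M $$ (p, p)) ^ m" using pow_block[OF Mc pn(1) A Bz] by blast
    then have "(M $$ (p, p)) ^ m = 0" using Mm pn by simp
    then have Mpp: "M $$ (p, p) = 0" by simp
    show ?thesis unfolding hessenberg_space_def
    proof (intro CollectI conjI allI impI)
      show "M \<in> carrier_mat n n" by (rule Mc)
      fix k l assume kl: "k < n" "l < n" "?h' (l + 1) < k + 1"
      show "M $$ (k, l) = 0"
      proof (cases "l + 1 = i")
        case True
        then have "l = p" by (simp add: p_def)
        then show ?thesis using kl True Bz Mpp by (cases "k = p") (auto simp: p_def)
      next
        case False
        then show ?thesis using kl MHz by auto
      qed
    qed
  qed
  show ?thesis unfolding hessenberg_variety_def
    using sub sup by blast
qed

end
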